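(* Let $e_1,e_2$ be connected events in the LTSI of CCSK$^{\mathrm P}$. Then: (1) exactly one of $e_1\mathrel\iota e_2$ and $e_1\otimes e_2$ holds; (2) if $e_1\odot e_2$ then $e_1\mathrel\iota e_2$; (3) if $e_1,e_2$ are composable and $e_1\mathrel\iota e_2$ then $e_1\odot e_2$.
   Context: Names $\mathsf N$ with bijection $\overline\cdot$ onto disjoint co-names; $\mathsf L=\mathsf N\cup\overline{\mathsf N}\cup\{\tau\}$ ($\alpha$ over $\mathsf L$, $\lambda$ over $\mathsf L\setminus\{\tau\}$); keys $\mathsf K$ denumerable. CCSK processes $X::=\mathbf 0\mid\alpha.X\mid X\backslash\lambda\mid X+Y\mid X|Y\mid\alpha[k].X$; $\mathrm{keys}(X)$ keys in $X$. Directions $D\in\{\mathrm L,\mathrm R\}$, $\bar{\mathrm L}=\mathrm R$, $\bar{\mathrm R}=\mathrm L$. Proof keyed labels $\theta::=\upsilon\alpha[k]\mid\upsilon\langle\upsilon_1\lambda[k],\upsilon_2\overline\lambda[k]\rangle$ ($\upsilon,\upsilon_i\in\{|_{\mathrm L},|_{\mathrm R},+_{\mathrm L},+_{\mathrm R}\}^*$), $\ell(\upsilon\alpha[k])=\alpha$, $\ell(\upsilon\langle\cdots\rangle)=\tau$, $\mathrm{key}(\theta)=k$. Forward CCSK$^{\mathrm P}$ transitions: least relation closed under (act) $\alpha.X\xrightarrow{\alpha[k]}\alpha[k].X$ if $\mathrm{keys}(X)=\emptyset$; (pre) $X\xrightarrow\theta X',\mathrm{key}(\theta)\ne k\Rightarrow\alpha[k].X\xrightarrow\theta\alpha[k].X'$;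 (res) $X\xrightarrow\theta X',\ell(\theta)\notin\{\lambda,\overline\lambda\}\Rightarrow X\backslash\lambda\xrightarrow\theta X'\backslash\lambda$; (par) $X\xrightarrow\theta X',\mathrm{key}(\theta)\notin\mathrm{keys}(Y)\Rightarrow X|Y\xrightarrow{|_{\mathrm L}\theta}X'|Y$, $Y|X\xrightarrow{|_{\mathrm R}\theta}Y|X'$; (syn) $X\xrightarrow{\upsilon_1\lambda[k]}X',Y\xrightarrow{\upsilon_2\overline\lambda[k]}Y'\Rightarrow X|Y\xrightarrow{\langle\upsilon_1\lambda[k],\upsilon_2\overline\lambda[k]\rangle}X'|Y'$; (sum) $X\xrightarrow\theta X',\mathrm{keys}(Y)=\emptyset\Rightarrow X+Y\xrightarrow{+_{\mathrm L}\theta}X'+Y$, $Y+X\xrightarrow{+_{\mathrm R}\theta}Y+X'$. Backward transitions are converses of forward ones; $\bar t$ is the inverse of $t$. Only processes reachable by a path from a key-free process are considered. Transitions are connected if there is a path from the source of one to the target of the other; composable if the target of the first is the source of the second; coinitial if same source. Relations on proof labels (least closed under rules; "prefix" = form $\beta[k']$): Connectivity $\frown$: (A1) $\alpha[k]\frown\theta$; (A2) $\theta\frown\alpha[k]$ if $\theta$ not a prefix; (P1) $|_D\theta\frown|_D\theta'$ if $\theta\frown\theta'$; (P2) $|_D\theta\frown|_{\bar D}\theta'$; (C1),(C2) likewise with $+$; (S1) $|_D\theta\frown\langle\theta_{\mathrm L},\theta_{\mathrm R}\rangle$ if $\theta\frown\theta_D$; (S2) symmetric; (S3) $\langle\theta_1,\theta_2\rangle\frown\langle\theta_1',\theta_2'\rangle$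 if $\theta_i\frown\theta_i'$ for $i=1,2$. Dependence $\otimes$: A1, A2, C1, C2, P1, S1, S2 with $\otimes$ for $\frown$; (P2$_k$) $|_D\theta\otimes|_{\bar D}\theta'$ if equal keys; (S3) $\langle\theta_1,\theta_2\rangle\otimes\langle\theta_1',\theta_2'\rangle$ if for some $i\ne j$, $\theta_i\otimes\theta_i'$ and $\theta_j\frown\theta_j'$. Independence $\iota$: C1, P1, S1, S2, S3 with $\iota$ for $\frown$, and (P2$_k$) $|_D\theta\mathrel\iota|_{\bar D}\theta'$ if different keys. On transitions: $t_1\mathrel\iota t_2$ iff connected and labels $\iota$. Event equivalence $\sim$: smallest equivalence on transitions with $t\sim t'$ whenever $t:P\to Q$, $u:P\to R$, $u':Q\to S$, $t':R\to S$ ($u'$ with label and direction of $u$, $t'$ of $t$) and $t\mathrel\iota u$. Events are classes $[t]$. For events: $e_1,e_2$ connected (resp. composable) if some $t_1\in e_1$, $t_2\in e_2$ are connected (resp. composable); $e_1\mathrel\iota e_2$ if some $t_1\in e_1,t_2\in e_2$ satisfy $t_1\mathrel\iota t_2$; $e_1\otimes e_2$ if some $t_1\in e_1,t_2\in e_2$ have labels satisfying $\otimes$; core independence $e_1\odot e_2$ if some coinitial $t_1\in e_1,t_2\in e_2$ satisfy $t_1\mathrel\iota t_2$. *)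

theory Defs
  imports Main
begin

datatype 'n vis = Nm 'n | Co 'n

datatype 'n act = Vis "'n vis" | Tau

type_synonym key = nat

fun cobar :: "'n vis \<Rightarrow> 'n vis" where
  "cobar (Nm a) = Co a"
| "cobar (Co a) = Nm a"

datatype 'n proc =
    Nil
  | Pre "'n act" "'n proc"
  | Res "'n proc" "'n vis"
  | Sum "'n proc" "'n proc"
  | Par "'n proc" "'n proc"
  | KPre "'n act" key "'n proc"

fun keys :: "'n proc \<Rightarrow> key set" where
  "keys Nil = {}"
| "keys (Pre a X) = keys X"
| "keys (Res X l) = keys X"
| "keys (Sum X Y) = keys X \<union> keys Y"
| "keys (Par X Y) = keys X \<union> keys Y"
| "keys (KPre a k X) = insert k (keys X)"

datatype dir = DL | DR

fun flip :: "dir \<Rightarrow> dir" where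
  "flip DL = DR" | "flip DR = DL"

text \<open>Proof keyed labels: Act a k = \<alpha>[k]; PL D t = |_D t; SL D t = +_D t;
  Syn t1 t2 = \<langle>t1,t2\<rangle>.\<close>
datatype 'n plab =
    Act "'n act" key
  | PL dir "'n plab"
  | SL dir "'n plab"
  | Syn "'n plab" "'n plab"

fun lab :: "'n plab \<Rightarrow> 'n act" where
  "lab (Act a k) = a"
| "lab (PL d t) = lab t"
| "lab (SL d t) = lab t"
| "lab (Syn t1 t2) = Tau"

fun pkey :: "'n plab \<Rightarrow> key" where
  "pkey (Act a k) = k"
| "pkey (PL d t) = pkey t"
| "pkey (SL d t) = pkey t"
| "pkey (Syn t1 t2) = pkey t1"

definition is_prefix :: "'n plab \<Rightarrow> bool" where
  "is_prefix t \<longleftrightarrow> (\<exists>a k. t = Act a k)"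

fun comp :: "dir \<Rightarrow> 'n plab \<Rightarrow> 'n plab \<Rightarrow> 'n plab" where
  "comp DL tL tR = tL" | "comp DR tL tR = tR"

inductive fwd :: "'n proc \<Rightarrow> 'n plab \<Rightarrow> 'n proc \<Rightarrow> bool" where
  act: "keys X = {} \<Longrightarrow> fwd (Pre a X) (Act a k) (KPre a k X)"
| pre: "fwd X t X' \<Longrightarrow> pkey t \<noteq> k \<Longrightarrow> fwd (KPre a k X) t (KPre a k X')"
| res: "fwd X t X' \<Longrightarrow> lab t \<noteq> Vis l \<Longrightarrow> lab t \<noteq> Vis (cobar l) \<Longrightarrow> fwd (Res X l) t (Res X' l)"
| parL: "fwd X t X' \<Longrightarrow> pkey t \<notin> keys Y \<Longrightarrow> fwd (Par X Y) (PL DL t) (Par X' Y)"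
| parR: "fwd X t X' \<Longrightarrow> pkey t \<notin> keys Y \<Longrightarrow> fwd (Par Y X) (PL DR t) (Par Y X')"
| syn: "fwd X t1 X' \<Longrightarrow> fwd Y t2 Y' \<Longrightarrow> lab t1 = Vis l \<Longrightarrow> lab t2 = Vis (cobar l)
        \<Longrightarrow> pkey t1 = k \<Longrightarrow> pkey t2 = k \<Longrightarrow> fwd (Par X Y) (Syn t1 t2) (Par X' Y')"
| sumL: "fwd X t X' \<Longrightarrow> keys Y = {} \<Longrightarrow> fwd (Sum X Y) (SL DL t) (Sum X' Y)"
| sumR: "fwd X t X' \<Longrightarrow> keys Y = {} \<Longrightarrow> fwd (Sum Y X) (SL DR t) (Sum Y X')"

text \<open>A single step, forward or backward (backward transitions are converses).\<close>
definition step :: "'n proc \<Rightarrow> 'n proc \<Rightarrow> bool" where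
  "step P Q \<longleftrightarrow> (\<exists>t. fwd P t Q \<or> fwd Q t P)"

definition reachable :: "'n proc \<Rightarrow> bool" where
  "reachable P \<longleftrightarrow> (\<exists>P0. keys P0 = {} \<and> step\<^sup>*\<^sup>* P0 P)"

text \<open>Tr P t True Q: forward transition P --t--> Q; Tr P t False Q: backward
  transition P ~~t~~> Q, i.e. fwd Q t P.\<close>
datatype 'n tr = Tr (src: "'n proc") (tlab: "'n plab") (fw: bool) (tgt: "'n proc")

definition is_tr :: "'n tr \<Rightarrow> bool" where
  "is_tr tr \<longleftrightarrow> reachable (src tr) \<and>
     (if fw tr then fwd (src tr) (tlab tr) (tgt tr) else fwd (tgt tr) (tlab tr) (src tr))"

definition tr_connected :: "'n tr \<Rightarrow> 'n tr \<Rightarrow> bool" where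
  "tr_connected t1 t2 \<longleftrightarrow> step\<^sup>*\<^sup>* (src t1) (tgt t2)"

inductive conn :: "'n plab \<Rightarrow> 'n plab \<Rightarrow> bool" where
  A1: "conn (Act a k) t"
| A2: "\<not> is_prefix t \<Longrightarrow> conn t (Act a k)"
| P1: "conn t t' \<Longrightarrow> conn (PL d t) (PL d t')"
| P2: "conn (PL d t) (PL (flip d) t')"
| C1: "conn t t' \<Longrightarrow> conn (SL d t) (SL d t')"
| C2: "conn (SL d t) (SL (flip d) t')"
| S1: "conn t (comp d tL tR) \<Longrightarrow> conn (PL d t) (Syn tL tR)"
| S2: "conn (comp d tL tR) t \<Longrightarrow> conn (Syn tL tR) (PL d t)"
| S3: "conn t1 t1' \<Longrightarrow> conn t2 t2' \<Longrightarrow> conn (Syn t1 t2) (Syn t1' t2')"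

inductive dep :: "'n plab \<Rightarrow> 'n plab \<Rightarrow> bool" where
  A1: "dep (Act a k) t"
| A2: "\<not> is_prefix t \<Longrightarrow> dep t (Act a k)"
| P1: "dep t t' \<Longrightarrow> dep (PL d t) (PL d t')"
| P2k: "pkey t = pkey t' \<Longrightarrow> dep (PL d t) (PL (flip d) t')"
| C1: "dep t t' \<Longrightarrow> dep (SL d t) (SL d t')"
| C2: "dep (SL d t) (SL (flip d) t')"
| S1: "dep t (comp d tL tR) \<Longrightarrow> dep (PL d t) (Syn tL tR)"
| S2: "dep (comp d tL tR) t \<Longrightarrow> dep (Syn tL tR) (PL d t)"
| S3a: "dep t1 t1' \<Longrightarrow> conn t2 t2' \<Longrightarrow> dep (Syn t1 t2) (Syn t1' t2')"
| S3b: "dep t2 t2' \<Longrightarrow> conn t1 t1' \<Longrightarrow> dep (Syn t1 t2) (Syn t1' t2')"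

inductive indep :: "'n plab \<Rightarrow> 'n plab \<Rightarrow> bool" where
  C1: "indep t t' \<Longrightarrow> indep (SL d t) (SL d t')"
| P1: "indep t t' \<Longrightarrow> indep (PL d t) (PL d t')"
| P2k: "pkey t \<noteq> pkey t' \<Longrightarrow> indep (PL d t) (PL (flip d) t')"
| S1: "indep t (comp d tL tR) \<Longrightarrow> indep (PL d t) (Syn tL tR)"
| S2: "indep (comp d tL tR) t \<Longrightarrow> indep (Syn tL tR) (PL d t)"
| S3: "indep t1 t1' \<Longrightarrow> indep t2 t2' \<Longrightarrow> indep (Syn t1 t2) (Syn t1' t2')"

definition tr_indep :: "'n tr \<Rightarrow> 'n tr \<Rightarrow> bool" where
  "tr_indep t1 t2 \<longleftrightarrow> is_tr t1 \<and> is_tr t2 \<and> tr_connected t1 t2 \<and> indep (tlab t1) (tlab t2)"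

definition square :: "'n tr \<Rightarrow> 'n tr \<Rightarrow> bool" where
  "square t t' \<longleftrightarrow> is_tr t \<and> is_tr t' \<and>
     (\<exists>u u'. is_tr u \<and> is_tr u' \<and>
        src u = src t \<and> src u' = tgt t \<and> src t' = tgt u \<and> tgt u' = tgt t' \<and>
        tlab u' = tlab u \<and> fw u' = fw u \<and> tlab t' = tlab t \<and> fw t' = fw t \<and>
        tr_indep t u)"

inductive ev_eq :: "'n tr \<Rightarrow> 'n tr \<Rightarrow> bool" where
  refl: "is_tr t \<Longrightarrow> ev_eq t t"
| base: "square t t' \<Longrightarrow> ev_eq t t'"
| sym: "ev_eq t t' \<Longrightarrow> ev_eq t' t"
| trans: "ev_eq t t' \<Longrightarrow> ev_eq t' t'' \<Longrightarrow> ev_eq t t''"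

definition is_event :: "'n tr set \<Rightarrow> bool" where
  "is_event e \<longleftrightarrow> (\<exists>t. is_tr t \<and> e = {t'. ev_eq t t'})"

definition ev_connected :: "'n tr set \<Rightarrow> 'n tr set \<Rightarrow> bool" where
  "ev_connected e1 e2 \<longleftrightarrow> (\<exists>t1\<in>e1. \<exists>t2\<in>e2. tr_connected t1 t2)"

definition ev_composable :: "'n tr set \<Rightarrow> 'n tr set \<Rightarrow> bool" where
  "ev_composable e1 e2 \<longleftrightarrow> (\<exists>t1\<in>e1. \<exists>t2\<in>e2. tgt t1 = src t2)"

definition ev_indep :: "'n tr set \<Rightarrow> 'n tr set \<Rightarrow> bool" where
  "ev_indep e1 e2 \<longleftrightarrow> (\<exists>t1\<in>e1. \<exists>t2\<in>e2. tr_indep t1 t2)"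

definition ev_dep :: "'n tr set \<Rightarrow> 'n tr set \<Rightarrow> bool" where
  "ev_dep e1 e2 \<longleftrightarrow> (\<exists>t1\<in>e1. \<exists>t2\<in>e2. dep (tlab t1) (tlab t2))"

definition ev_core_indep :: "'n tr set \<Rightarrow> 'n tr set \<Rightarrow> bool" where
  "ev_core_indep e1 e2 \<longleftrightarrow> (\<exists>t1\<in>e1. \<exists>t2\<in>e2. src t1 = src t2 \<and> tr_indep t1 t2)"

end

theory Submission imports Defs begin

inductive_simps indep_simps: "indep (Act a k) t" "indep t (Act a k)" "indep (PL d t) t'" "indep (SL d t) t'" "indep (Syn t1 t2) t'"

inductive_cases fwd_ParE: "fwd (Par X Y) t Q"
inductive_cases fwd_SumE: "fwd (Sum X Y) t Q"
inductive_cases fwd_ResE: "fwd (Res X l) t Q"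
inductive_cases fwd_KPreE: "fwd (KPre a k X) t Q"
inductive_cases fwd_ParE2: "fwd R t (Par X Y)"
inductive_cases fwd_SumE2: "fwd R t (Sum X Y)"
inductive_cases fwd_ResE2: "fwd R t (Res X l)"
inductive_cases fwd_KPreE2: "fwd R t (KPre a k X)"

lemma keys_fwd: "fwd X t X' \<Longrightarrow> keys X' = insert (pkey t) (keys X)"
  by (induction rule: fwd.induct) auto

lemma pkey_notin: "fwd X t X' \<Longrightarrow> pkey t \<notin> keys X"
  by (induction rule: fwd.induct) auto

lemma indep_sym: "indep t u \<Longrightarrow> indep u t"
proof (induction rule: indep.induct)
  case (P2k t t' d)
  then show ?case using indep.P2k[of t' t "flip d"] by (cases d) auto
qed (auto intro: indep.intros)

lemma SP_FF: "fwd P t Q \<Longrightarrow> fwd P u R \<Longrightarrow> indep t u \<Longrightarrow> \<exists>S. fwd Q u S \<and> fwd R t S"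
proof (induction arbitrary: u R rule: fwd.induct)
  case (act X a k)
  then show ?case by (simp add: indep_simps)
next
  case (pre X t X' k a)
  from pre.prems(1) show ?case
  proof (rule fwd_KPreE)
    fix Y assume "R = KPre a k Y" "fwd X u Y" "pkey u \<noteq> k"
    with pre obtain S0 where "fwd X' u S0" "fwd Y t S0" by blast
    then show ?thesis using pre \<open>R = _\<close> \<open>pkey u \<noteq> k\<close> by (blast intro: fwd.pre)
  qed
next
  case (res X t X' l)
  from res.prems(1) show ?case
  proof (rule fwd_ResE)
    fix Y assume "R = Res Y l" "fwd X u Y" "lab u \<noteq> Vis l" "lab u \<noteq> Vis (cobar l)"
    with res obtain S0 where "fwd X' u S0" "fwd Y t S0" by blast
    then show ?thesis using res \<open>R = _\<close> \<open>lab u \<noteq> Vis l\<close> \<open>lab u \<noteq> Vis (cobar l)\<close> by (blast intro: fwd.res)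
  qed
next
  case (parL X t X' Y)
  from parL.prems(1) show ?case
  proof (rule fwd_ParE)
    fix u0 X2 assume h: "u = PL DL u0" "R = Par X2 Y" "fwd X u0 X2" "pkey u0 \<notin> keys Y"
    with parL.prems(2) have "indep t u0" by (auto simp: indep_simps)
    with parL h obtain S0 where "fwd X' u0 S0" "fwd X2 t S0" by blast
    then show ?thesis using parL h by (blast intro: fwd.parL)
  next
    fix u0 Y2 assume h: "u = PL DR u0" "R = Par X Y2" "fwd Y u0 Y2" "pkey u0 \<notin> keys X"
    with parL.prems(2) have "pkey t \<noteq> pkey u0" by (auto simp: indep_simps)
    have "fwd (Par X' Y) (PL DR u0) (Par X' Y2)"
      using h \<open>pkey t \<noteq> pkey u0\<close> keys_fwd[OF parL.hyps(1)] by (auto intro: fwd.parR)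
    moreover have "fwd (Par X Y2) (PL DL t) (Par X' Y2)"
      using h \<open>pkey t \<noteq> pkey u0\<close> keys_fwd[OF h(3)] parL by (auto intro: fwd.parL)
    ultimately show ?thesis using h by blast
  next
    fix u1 X2 u2 Y2 l assume h: "u = Syn u1 u2" "R = Par X2 Y2" "fwd X u1 X2" "fwd Y u2 Y2"
      "lab u1 = Vis l" "lab u2 = Vis (cobar l)" "pkey u2 = pkey u1"
    with parL.prems(2) have "indep t u1" by (auto simp: indep_simps)
    with parL h obtain S0 where s: "fwd X' u1 S0" "fwd X2 t S0" by blast
    have "pkey u1 \<noteq> pkey t" using pkey_notin[OF s(1)] keys_fwd[OF parL.hyps(1)] by auto
    have "fwd (Par X' Y) (Syn u1 u2) (Par S0 Y2)" using h s by (auto intro: fwd.syn)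
    moreover have "fwd (Par X2 Y2) (PL DL t) (Par S0 Y2)"
      using s h parL \<open>pkey u1 \<noteq> pkey t\<close> keys_fwd[OF h(4)] by (auto intro: fwd.parL)
    ultimately show ?thesis using h by blast
  qed
next
  case (parR X t X' Y)
  from parR.prems(1) show ?case
  proof (rule fwd_ParE)
    fix u0 Y2 assume h: "u = PL DR u0" "R = Par Y Y2" "fwd X u0 Y2" "pkey u0 \<notin> keys Y"
    with parR.prems(2) have "indep t u0" by (auto simp: indep_simps)
    with parR h obtain S0 where "fwd X' u0 S0" "fwd Y2 t S0" by blast
    then show ?thesis using parR h by (blast intro: fwd.parR)
  next
    fix u0 X2 assume h: "u = PL DL u0" "R = Par X2 X" "fwd Y u0 X2" "pkey u0 \<notin> keys X"
    with parR.prems(2) have "pkey t \<noteq> pkey u0" by (auto simp: indep_simps)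
    have "fwd (Par Y X') (PL DL u0) (Par X2 X')"
      using h \<open>pkey t \<noteq> pkey u0\<close> keys_fwd[OF parR.hyps(1)] by (auto intro: fwd.parL)
    moreover have "fwd (Par X2 X) (PL DR t) (Par X2 X')"
      using h \<open>pkey t \<noteq> pkey u0\<close> keys_fwd[OF h(3)] parR by (auto intro: fwd.parR)
    ultimately show ?thesis using h by blast
  next
    fix u1 X2 u2 Y2 l assume h: "u = Syn u1 u2" "R = Par X2 Y2" "fwd Y u1 X2" "fwd X u2 Y2"
      "lab u1 = Vis l" "lab u2 = Vis (cobar l)" "pkey u2 = pkey u1"
    with parR.prems(2) have "indep t u2" by (auto simp: indep_simps)
    with parR h obtain S0 where s: "fwd X' u2 S0" "fwd Y2 t S0" by blast
    have "pkey u2 \<noteq> pkey t" using pkey_notin[OF s(1)] keys_fwd[OF parR.hyps(1)] by auto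
    have "fwd (Par Y X') (Syn u1 u2) (Par X2 S0)" using h s by (auto intro: fwd.syn)
    moreover have "fwd (Par X2 Y2) (PL DR t) (Par X2 S0)"
      using s h parR \<open>pkey u2 \<noteq> pkey t\<close> keys_fwd[OF h(3)] by (auto intro: fwd.parR)
    ultimately show ?thesis using h by blast
  qed
next
  case (syn X t1 X' Y t2 Y' l k)
  from syn.prems(1) show ?case
  proof (rule fwd_ParE)
    fix u0 X2 assume h: "u = PL DL u0" "R = Par X2 Y" "fwd X u0 X2" "pkey u0 \<notin> keys Y"
    with syn.prems(2) have "indep t1 u0" by (auto simp: indep_simps)
    with syn h obtain S0 where s: "fwd X' u0 S0" "fwd X2 t1 S0" by blast
    have "pkey u0 \<noteq> pkey t1" using pkey_notin[OF s(2)] keys_fwd[OF h(3)] by auto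
    have "fwd (Par X' Y') (PL DL u0) (Par S0 Y')"
      using s h syn \<open>pkey u0 \<noteq> pkey t1\<close> keys_fwd[OF syn.hyps(2)] by (auto intro: fwd.parL)
    moreover have "fwd (Par X2 Y) (Syn t1 t2) (Par S0 Y')" using h s syn by (auto intro: fwd.syn)
    ultimately show ?thesis using h by blast
  next
    fix u0 Y2 assume h: "u = PL DR u0" "R = Par X Y2" "fwd Y u0 Y2" "pkey u0 \<notin> keys X"
    with syn.prems(2) have "indep t2 u0" by (auto simp: indep_simps)
    with syn h obtain S0 where s: "fwd Y' u0 S0" "fwd Y2 t2 S0" by blast
    have "pkey u0 \<noteq> pkey t2" using pkey_notin[OF s(2)] keys_fwd[OF h(3)] by auto
    have "fwd (Par X' Y') (PL DR u0) (Par X' S0)"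
      using s h syn \<open>pkey u0 \<noteq> pkey t2\<close> keys_fwd[OF syn.hyps(1)] by (auto intro: fwd.parR)
    moreover have "fwd (Par X Y2) (Syn t1 t2) (Par X' S0)" using h s syn by (auto intro: fwd.syn)
    ultimately show ?thesis using h by blast
  next
    fix u1 X2 u2 Y2 l' assume h: "u = Syn u1 u2" "R = Par X2 Y2" "fwd X u1 X2" "fwd Y u2 Y2"
      "lab u1 = Vis l'" "lab u2 = Vis (cobar l')" "pkey u2 = pkey u1"
    with syn.prems(2) have "indep t1 u1" "indep t2 u2" by (auto simp: indep_simps)
    with syn h obtain S1 S2 where s: "fwd X' u1 S1" "fwd X2 t1 S1" "fwd Y' u2 S2" "fwd Y2 t2 S2" by meson
    have "fwd (Par X' Y') (Syn u1 u2) (Par S1 S2)" using h s by (auto intro: fwd.syn)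
    moreover have "fwd (Par X2 Y2) (Syn t1 t2) (Par S1 S2)" using h s syn by (auto intro: fwd.syn)
    ultimately show ?thesis using h by blast
  qed
next
  case (sumL X t X' Y)
  from sumL.prems(1) show ?case
  proof (rule fwd_SumE)
    fix u0 X2 assume h: "u = SL DL u0" "R = Sum X2 Y" "fwd X u0 X2" "keys Y = {}"
    with sumL.prems(2) have "indep t u0" by (auto simp: indep_simps)
    with sumL h obtain S0 where "fwd X' u0 S0" "fwd X2 t S0" by blast
    then show ?thesis using sumL h by (blast intro: fwd.sumL)
  next
    fix u0 X2 assume h: "u = SL DR u0" "R = Sum X X2" "fwd Y u0 X2" "keys X = {}"
    with sumL.prems(2) show ?thesis by (auto simp: indep_simps)
  qed
next
  case (sumR X t X' Y)
  from sumR.prems(1) show ?case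
  proof (rule fwd_SumE)
    fix u0 X2 assume h: "u = SL DR u0" "R = Sum Y X2" "fwd X u0 X2" "keys Y = {}"
    with sumR.prems(2) have "indep t u0" by (auto simp: indep_simps)
    with sumR h obtain S0 where "fwd X' u0 S0" "fwd X2 t S0" by blast
    then show ?thesis using sumR h by (blast intro: fwd.sumR)
  next
    fix u0 X2 assume h: "u = SL DL u0" "R = Sum X2 X" "fwd Y u0 X2" "keys X = {}"
    with sumR.prems(2) show ?thesis by (auto simp: indep_simps)
  qed
qed

lemma keys_mono: "fwd X t X' \<Longrightarrow> keys X \<subseteq> keys X'"
  using keys_fwd by blast

lemma SP_BB: "fwd Q t P \<Longrightarrow> fwd R u P \<Longrightarrow> indep t u \<Longrightarrow> \<exists>S. fwd S u Q \<and> fwd S t R"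
proof (induction arbitrary: u R rule: fwd.induct)
  case (act X a k)
  then show ?case by (simp add: indep_simps)
next
  case (pre X t X' k a)
  from pre.prems(1) show ?case
  proof (rule fwd_KPreE2)
    assume "u = Act a k" with pre show ?thesis by (simp add: indep_simps)
  next
    fix Y assume "R = KPre a k Y" "fwd Y u X'" "pkey u \<noteq> k"
    with pre obtain S0 where "fwd S0 u X" "fwd S0 t Y" by blast
    then show ?thesis using pre \<open>R = _\<close> \<open>pkey u \<noteq> k\<close> by (blast intro: fwd.pre)
  qed
next
  case (res X t X' l)
  from res.prems(1) show ?case
  proof (rule fwd_ResE2)
    fix Y assume "R = Res Y l" "fwd Y u X'" "lab u \<noteq> Vis l" "lab u \<noteq> Vis (cobar l)"
    with res obtain S0 where "fwd S0 u X" "fwd S0 t Y" by blast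
    then show ?thesis using res \<open>R = _\<close> \<open>lab u \<noteq> Vis l\<close> \<open>lab u \<noteq> Vis (cobar l)\<close> by (blast intro: fwd.res)
  qed
next
  case (parL X t X' Y)
  from parL.prems(1) show ?case
  proof (rule fwd_ParE2)
    fix X2 u0 assume h: "R = Par X2 Y" "u = PL DL u0" "fwd X2 u0 X'" "pkey u0 \<notin> keys Y"
    with parL.prems(2) have "indep t u0" by (auto simp: indep_simps)
    with parL h obtain S0 where "fwd S0 u0 X" "fwd S0 t X2" by blast
    then show ?thesis using parL h by (blast intro: fwd.parL)
  next
    fix Y2 u0 assume h: "R = Par X' Y2" "u = PL DR u0" "fwd Y2 u0 Y" "pkey u0 \<notin> keys X'"
    have "fwd (Par X Y2) (PL DR u0) (Par X Y)"
      using h keys_mono[OF parL.hyps(1)] by (auto intro: fwd.parR)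
    moreover have "fwd (Par X Y2) (PL DL t) (Par X' Y2)"
      using h keys_mono[OF h(3)] parL by (auto intro: fwd.parL)
    ultimately show ?thesis using h by blast
  next
    fix X2 u1 Y2 u2 l assume h: "R = Par X2 Y2" "u = Syn u1 u2" "fwd X2 u1 X'" "fwd Y2 u2 Y"
      "lab u1 = Vis l" "lab u2 = Vis (cobar l)" "pkey u2 = pkey u1"
    with parL.prems(2) have "indep t u1" by (auto simp: indep_simps)
    with parL h obtain S0 where s: "fwd S0 u1 X" "fwd S0 t X2" by blast
    have "fwd (Par S0 Y2) (Syn u1 u2) (Par X Y)" using h s by (auto intro: fwd.syn)
    moreover have "fwd (Par S0 Y2) (PL DL t) (Par X2 Y2)"
      using s h parL keys_mono[OF h(4)] by (auto intro: fwd.parL)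
    ultimately show ?thesis using h by blast
  qed
next
  case (parR X t X' Y)
  from parR.prems(1) show ?case
  proof (rule fwd_ParE2)
    fix Y2 u0 assume h: "R = Par Y Y2" "u = PL DR u0" "fwd Y2 u0 X'" "pkey u0 \<notin> keys Y"
    with parR.prems(2) have "indep t u0" by (auto simp: indep_simps)
    with parR h obtain S0 where "fwd S0 u0 X" "fwd S0 t Y2" by blast
    then show ?thesis using parR h by (blast intro: fwd.parR)
  next
    fix X2 u0 assume h: "R = Par X2 X'" "u = PL DL u0" "fwd X2 u0 Y" "pkey u0 \<notin> keys X'"
    have "fwd (Par X2 X) (PL DL u0) (Par Y X)"
      using h keys_mono[OF parR.hyps(1)] by (auto intro: fwd.parL)
    moreover have "fwd (Par X2 X) (PL DR t) (Par X2 X')"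
      using h keys_mono[OF h(3)] parR by (auto intro: fwd.parR)
    ultimately show ?thesis using h by blast
  next
    fix X2 u1 Y2 u2 l assume h: "R = Par X2 Y2" "u = Syn u1 u2" "fwd X2 u1 Y" "fwd Y2 u2 X'"
      "lab u1 = Vis l" "lab u2 = Vis (cobar l)" "pkey u2 = pkey u1"
    with parR.prems(2) have "indep t u2" by (auto simp: indep_simps)
    with parR h obtain S0 where s: "fwd S0 u2 X" "fwd S0 t Y2" by blast
    have "fwd (Par X2 S0) (Syn u1 u2) (Par Y X)" using h s by (auto intro: fwd.syn)
    moreover have "fwd (Par X2 S0) (PL DR t) (Par X2 Y2)"
      using s h parR keys_mono[OF h(3)] by (auto intro: fwd.parR)
    ultimately show ?thesis using h by blast
  qed
next
  case (syn X t1 X' Y t2 Y' l k)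
  from syn.prems(1) show ?case
  proof (rule fwd_ParE2)
    fix X2 u0 assume h: "R = Par X2 Y'" "u = PL DL u0" "fwd X2 u0 X'" "pkey u0 \<notin> keys Y'"
    with syn.prems(2) have "indep t1 u0" by (auto simp: indep_simps)
    with syn h obtain S0 where s: "fwd S0 u0 X" "fwd S0 t1 X2" by blast
    have "fwd (Par S0 Y) (PL DL u0) (Par X Y)"
      using s h keys_mono[OF syn.hyps(2)] by (auto intro: fwd.parL)
    moreover have "fwd (Par S0 Y) (Syn t1 t2) (Par X2 Y')" using h s syn by (auto intro: fwd.syn)
    ultimately show ?thesis using h by blast
  next
    fix Y2 u0 assume h: "R = Par X' Y2" "u = PL DR u0" "fwd Y2 u0 Y'" "pkey u0 \<notin> keys X'"
    with syn.prems(2) have "indep t2 u0" by (auto simp: indep_simps)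
    with syn h obtain S0 where s: "fwd S0 u0 Y" "fwd S0 t2 Y2" by blast
    have "fwd (Par X S0) (PL DR u0) (Par X Y)"
      using s h keys_mono[OF syn.hyps(1)] by (auto intro: fwd.parR)
    moreover have "fwd (Par X S0) (Syn t1 t2) (Par X' Y2)" using h s syn by (auto intro: fwd.syn)
    ultimately show ?thesis using h by blast
  next
    fix X2 u1 Y2 u2 l' assume h: "R = Par X2 Y2" "u = Syn u1 u2" "fwd X2 u1 X'" "fwd Y2 u2 Y'"
      "lab u1 = Vis l'" "lab u2 = Vis (cobar l')" "pkey u2 = pkey u1"
    with syn.prems(2) have "indep t1 u1" "indep t2 u2" by (auto simp: indep_simps)
    with syn h obtain S1 S2 where s: "fwd S1 u1 X" "fwd S1 t1 X2" "fwd S2 u2 Y" "fwd S2 t2 Y2" by meson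
    have "fwd (Par S1 S2) (Syn u1 u2) (Par X Y)" using h s by (auto intro: fwd.syn)
    moreover have "fwd (Par S1 S2) (Syn t1 t2) (Par X2 Y2)" using h s syn by (auto intro: fwd.syn)
    ultimately show ?thesis using h by blast
  qed
next
  case (sumL X t X' Y)
  from sumL.prems(1) show ?case
  proof (rule fwd_SumE2)
    fix X2 u0 assume h: "R = Sum X2 Y" "u = SL DL u0" "fwd X2 u0 X'" "keys Y = {}"
    with sumL.prems(2) have "indep t u0" by (auto simp: indep_simps)
    with sumL h obtain S0 where "fwd S0 u0 X" "fwd S0 t X2" by blast
    then show ?thesis using sumL h by (blast intro: fwd.sumL)
  next
    fix X2 u0 assume h: "R = Sum X' X2" "u = SL DR u0" "fwd X2 u0 Y" "keys X' = {}"
    with sumL.prems(2) show ?thesis by (auto simp: indep_simps)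
  qed
next
  case (sumR X t X' Y)
  from sumR.prems(1) show ?case
  proof (rule fwd_SumE2)
    fix X2 u0 assume h: "R = Sum Y X2" "u = SL DR u0" "fwd X2 u0 X'" "keys Y = {}"
    with sumR.prems(2) have "indep t u0" by (auto simp: indep_simps)
    with sumR h obtain S0 where "fwd S0 u0 X" "fwd S0 t X2" by blast
    then show ?thesis using sumR h by (blast intro: fwd.sumR)
  next
    fix X2 u0 assume h: "R = Sum X2 X'" "u = SL DL u0" "fwd X2 u0 Y" "keys X' = {}"
    with sumR.prems(2) show ?thesis by (auto simp: indep_simps)
  qed
qed

lemma SP_FB: "fwd P t Q \<Longrightarrow> fwd R u P \<Longrightarrow> indep t u \<Longrightarrow> \<exists>S. fwd S u Q \<and> fwd R t S"
proof (induction arbitrary: u R rule: fwd.induct)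
  case (act X a k)
  then show ?case by (simp add: indep_simps)
next
  case (pre X t X' k a)
  from pre.prems(1) show ?case
  proof (rule fwd_KPreE2)
    assume "u = Act a k" with pre show ?thesis by (simp add: indep_simps)
  next
    fix Y assume "R = KPre a k Y" "fwd Y u X" "pkey u \<noteq> k"
    with pre obtain S0 where "fwd S0 u X'" "fwd Y t S0" by blast
    then show ?thesis using pre \<open>R = _\<close> \<open>pkey u \<noteq> k\<close> by (blast intro: fwd.pre)
  qed
next
  case (res X t X' l)
  from res.prems(1) show ?case
  proof (rule fwd_ResE2)
    fix Y assume "R = Res Y l" "fwd Y u X" "lab u \<noteq> Vis l" "lab u \<noteq> Vis (cobar l)"
    with res obtain S0 where "fwd S0 u X'" "fwd Y t S0" by blast
    then show ?thesis using res \<open>R = _\<close> \<open>lab u \<noteq> Vis l\<close> \<open>lab u \<noteq> Vis (cobar l)\<close> by (blast intro: fwd.res)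
  qed
next
  case (parL X t X' Y)
  from parL.prems(1) show ?case
  proof (rule fwd_ParE2)
    fix X2 u0 assume h: "R = Par X2 Y" "u = PL DL u0" "fwd X2 u0 X" "pkey u0 \<notin> keys Y"
    with parL.prems(2) have "indep t u0" by (auto simp: indep_simps)
    with parL h obtain S0 where "fwd S0 u0 X'" "fwd X2 t S0" by blast
    then show ?thesis using parL h by (blast intro: fwd.parL)
  next
    fix Y2 u0 assume h: "R = Par X Y2" "u = PL DR u0" "fwd Y2 u0 Y" "pkey u0 \<notin> keys X"
    with parL.prems(2) have "pkey t \<noteq> pkey u0" by (auto simp: indep_simps)
    have "fwd (Par X' Y2) (PL DR u0) (Par X' Y)"
      using h \<open>pkey t \<noteq> pkey u0\<close> keys_fwd[OF parL.hyps(1)] by (auto intro: fwd.parR)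
    moreover have "fwd (Par X Y2) (PL DL t) (Par X' Y2)"
      using h keys_mono[OF h(3)] parL by (auto intro: fwd.parL)
    ultimately show ?thesis using h by blast
  next
    fix X2 u1 Y2 u2 l assume h: "R = Par X2 Y2" "u = Syn u1 u2" "fwd X2 u1 X" "fwd Y2 u2 Y"
      "lab u1 = Vis l" "lab u2 = Vis (cobar l)" "pkey u2 = pkey u1"
    with parL.prems(2) have "indep t u1" by (auto simp: indep_simps)
    with parL h obtain S0 where s: "fwd S0 u1 X'" "fwd X2 t S0" by blast
    have "fwd (Par S0 Y2) (Syn u1 u2) (Par X' Y)" using h s by (auto intro: fwd.syn)
    moreover have "fwd (Par X2 Y2) (PL DL t) (Par S0 Y2)"
      using s h parL keys_mono[OF h(4)] by (auto intro: fwd.parL)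
    ultimately show ?thesis using h by blast
  qed
next
  case (parR X t X' Y)
  from parR.prems(1) show ?case
  proof (rule fwd_ParE2)
    fix Y2 u0 assume h: "R = Par Y Y2" "u = PL DR u0" "fwd Y2 u0 X" "pkey u0 \<notin> keys Y"
    with parR.prems(2) have "indep t u0" by (auto simp: indep_simps)
    with parR h obtain S0 where "fwd S0 u0 X'" "fwd Y2 t S0" by blast
    then show ?thesis using parR h by (blast intro: fwd.parR)
  next
    fix X2 u0 assume h: "R = Par X2 X" "u = PL DL u0" "fwd X2 u0 Y" "pkey u0 \<notin> keys X"
    with parR.prems(2) have "pkey t \<noteq> pkey u0" by (auto simp: indep_simps)
    have "fwd (Par X2 X') (PL DL u0) (Par Y X')"
      using h \<open>pkey t \<noteq> pkey u0\<close> keys_fwd[OF parR.hyps(1)] by (auto intro: fwd.parL)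
    moreover have "fwd (Par X2 X) (PL DR t) (Par X2 X')"
      using h keys_mono[OF h(3)] parR by (auto intro: fwd.parR)
    ultimately show ?thesis using h by blast
  next
    fix X2 u1 Y2 u2 l assume h: "R = Par X2 Y2" "u = Syn u1 u2" "fwd X2 u1 Y" "fwd Y2 u2 X"
      "lab u1 = Vis l" "lab u2 = Vis (cobar l)" "pkey u2 = pkey u1"
    with parR.prems(2) have "indep t u2" by (auto simp: indep_simps)
    with parR h obtain S0 where s: "fwd S0 u2 X'" "fwd Y2 t S0" by blast
    have "fwd (Par X2 S0) (Syn u1 u2) (Par Y X')" using h s by (auto intro: fwd.syn)
    moreover have "fwd (Par X2 Y2) (PL DR t) (Par X2 S0)"
      using s h parR keys_mono[OF h(3)] by (auto intro: fwd.parR)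
    ultimately show ?thesis using h by blast
  qed
next
  case (syn X t1 X' Y t2 Y' l k)
  from syn.prems(1) show ?case
  proof (rule fwd_ParE2)
    fix X2 u0 assume h: "R = Par X2 Y" "u = PL DL u0" "fwd X2 u0 X" "pkey u0 \<notin> keys Y"
    with syn.prems(2) have "indep t1 u0" by (auto simp: indep_simps)
    with syn h obtain S0 where s: "fwd S0 u0 X'" "fwd X2 t1 S0" by blast
    have "pkey u0 \<noteq> pkey t1" using pkey_notin[OF s(1)] keys_fwd[OF s(2)] by auto
    have "fwd (Par S0 Y') (PL DL u0) (Par X' Y')"
      using s h syn \<open>pkey u0 \<noteq> pkey t1\<close> keys_fwd[OF syn.hyps(2)] by (auto intro: fwd.parL)
    moreover have "fwd (Par X2 Y) (Syn t1 t2) (Par S0 Y')" using h s syn by (auto intro: fwd.syn)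
    ultimately show ?thesis using h by blast
  next
    fix Y2 u0 assume h: "R = Par X Y2" "u = PL DR u0" "fwd Y2 u0 Y" "pkey u0 \<notin> keys X"
    with syn.prems(2) have "indep t2 u0" by (auto simp: indep_simps)
    with syn h obtain S0 where s: "fwd S0 u0 Y'" "fwd Y2 t2 S0" by blast
    have "pkey u0 \<noteq> pkey t2" using pkey_notin[OF s(1)] keys_fwd[OF s(2)] by auto
    have "fwd (Par X' S0) (PL DR u0) (Par X' Y')"
      using s h syn \<open>pkey u0 \<noteq> pkey t2\<close> keys_fwd[OF syn.hyps(1)] by (auto intro: fwd.parR)
    moreover have "fwd (Par X Y2) (Syn t1 t2) (Par X' S0)" using h s syn by (auto intro: fwd.syn)
    ultimately show ?thesis using h by blast
  next
    fix X2 u1 Y2 u2 l' assume h: "R = Par X2 Y2" "u = Syn u1 u2" "fwd X2 u1 X" "fwd Y2 u2 Y"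
      "lab u1 = Vis l'" "lab u2 = Vis (cobar l')" "pkey u2 = pkey u1"
    with syn.prems(2) have "indep t1 u1" "indep t2 u2" by (auto simp: indep_simps)
    with syn h obtain S1 S2 where s: "fwd S1 u1 X'" "fwd X2 t1 S1" "fwd S2 u2 Y'" "fwd Y2 t2 S2" by meson
    have "fwd (Par S1 S2) (Syn u1 u2) (Par X' Y')" using h s by (auto intro: fwd.syn)
    moreover have "fwd (Par X2 Y2) (Syn t1 t2) (Par S1 S2)" using h s syn by (auto intro: fwd.syn)
    ultimately show ?thesis using h by blast
  qed
next
  case (sumL X t X' Y)
  from sumL.prems(1) show ?case
  proof (rule fwd_SumE2)
    fix X2 u0 assume h: "R = Sum X2 Y" "u = SL DL u0" "fwd X2 u0 X" "keys Y = {}"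
    with sumL.prems(2) have "indep t u0" by (auto simp: indep_simps)
    with sumL h obtain S0 where "fwd S0 u0 X'" "fwd X2 t S0" by blast
    then show ?thesis using sumL h by (blast intro: fwd.sumL)
  next
    fix X2 u0 assume h: "R = Sum X X2" "u = SL DR u0" "fwd X2 u0 Y" "keys X = {}"
    with sumL.prems(2) show ?thesis by (auto simp: indep_simps)
  qed
next
  case (sumR X t X' Y)
  from sumR.prems(1) show ?case
  proof (rule fwd_SumE2)
    fix X2 u0 assume h: "R = Sum Y X2" "u = SL DR u0" "fwd X2 u0 X" "keys Y = {}"
    with sumR.prems(2) have "indep t u0" by (auto simp: indep_simps)
    with sumR h obtain S0 where "fwd S0 u0 X'" "fwd X2 t S0" by blast
    then show ?thesis using sumR h by (blast intro: fwd.sumR)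
  next
    fix X2 u0 assume h: "R = Sum X2 X" "u = SL DL u0" "fwd X2 u0 Y" "keys X = {}"
    with sumR.prems(2) show ?thesis by (auto simp: indep_simps)
  qed
qed

definition ts :: "'n proc \<Rightarrow> 'n plab \<Rightarrow> bool \<Rightarrow> 'n proc \<Rightarrow> bool" where
  "ts P t b Q \<longleftrightarrow> (if b then fwd P t Q else fwd Q t P)"

lemma SP: "ts P t b Q \<Longrightarrow> ts P u c R \<Longrightarrow> indep t u \<Longrightarrow> \<exists>S. ts Q u c S \<and> ts R t b S"
proof (cases b; cases c)
  assume "b" "c" "ts P t b Q" "ts P u c R" "indep t u"
  then show ?thesis using SP_FF unfolding ts_def by auto
next
  assume "b" "\<not>c" "ts P t b Q" "ts P u c R" "indep t u"
  then show ?thesis using SP_FB unfolding ts_def by auto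
next
  assume "\<not>b" "c" "ts P t b Q" "ts P u c R" "indep t u"
  then show ?thesis using SP_FB[of P u R Q t] indep_sym unfolding ts_def by auto
next
  assume "\<not>b" "\<not>c" "ts P t b Q" "ts P u c R" "indep t u"
  then show ?thesis using SP_BB unfolding ts_def by auto
qed

lemma ts_rev: "ts P t b Q \<longleftrightarrow> ts Q t (\<not> b) P"
  unfolding ts_def by auto

lemma ts_step: "ts P t b Q \<Longrightarrow> step P Q"
  unfolding ts_def step_def by (auto split: if_splits)

lemma is_tr_ts: "is_tr tr \<longleftrightarrow> reachable (src tr) \<and> ts (src tr) (tlab tr) (fw tr) (tgt tr)"
  unfolding is_tr_def ts_def by simp

lemma reachable_step: "reachable P \<Longrightarrow> step P Q \<Longrightarrow> reachable Q"
  unfolding reachable_def by (meson rtranclp.rtrancl_into_rtrancl)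

fun er :: "'n proc \<Rightarrow> 'n proc" where
  "er Nil = Nil"
| "er (Pre a X) = Pre a (er X)"
| "er (KPre a k X) = Pre a (er X)"
| "er (Res X l) = Res (er X) l"
| "er (Sum X Y) = Sum (er X) (er Y)"
| "er (Par X Y) = Par (er X) (er Y)"

lemma fwd_er: "fwd P t Q \<Longrightarrow> er P = er Q"
  by (induction rule: fwd.induct) auto

lemma step_er: "step P Q \<Longrightarrow> er P = er Q"
  unfolding step_def using fwd_er by metis

lemma steps_er: "step\<^sup>*\<^sup>* P Q \<Longrightarrow> er P = er Q"
  by (induction rule: rtranclp_induct) (auto dest: step_er)

lemma conn_Act_right: "conn t (Act a k)"
  by (cases t) (auto simp: is_prefix_def intro: conn.intros)

lemma conn_P2': "conn (PL DL t) (PL DR t')" "conn (PL DR t) (PL DL t')"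
  using conn.P2[of DL t t'] conn.P2[of DR t t'] by auto
lemma conn_C2': "conn (SL DL t) (SL DR t')" "conn (SL DR t) (SL DL t')"
  using conn.C2[of DL t t'] conn.C2[of DR t t'] by auto
lemma conn_S1': "conn t tL \<Longrightarrow> conn (PL DL t) (Syn tL tR)" "conn t tR \<Longrightarrow> conn (PL DR t) (Syn tL tR)"
  using conn.S1[of t DL tL tR] conn.S1[of t DR tL tR] by auto
lemma conn_S2': "conn tL t \<Longrightarrow> conn (Syn tL tR) (PL DL t)" "conn tR t \<Longrightarrow> conn (Syn tL tR) (PL DR t)"
  using conn.S2[of DL tL tR t] conn.S2[of DR tL tR t] by auto

inductive_cases fwd_PreE: "fwd (Pre a X) t Q"
inductive_cases fwd_NilE: "fwd Nil t Q"

lemma conn_lemma: "fwd P l P' \<Longrightarrow> fwd Q m Q' \<Longrightarrow> er P = er Q \<Longrightarrow> conn l m"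
proof (induction arbitrary: Q m Q' rule: fwd.induct)
  case (act X a k)
  then show ?case by (auto intro: conn.intros)
next
  case (pre X t X' k a)
  then show ?case by (cases Q) (auto elim!: fwd_KPreE fwd_PreE intro: conn_Act_right)
next
  case (res X t X' l)
  then show ?case by (cases Q) (auto elim!: fwd_ResE intro: conn_Act_right)
next
  case (parL X t X' Y)
  then show ?case by (cases Q) (auto elim!: fwd_ParE intro: conn_Act_right conn.P1 conn_P2' conn_S1')
next
  case (parR X t X' Y)
  then show ?case by (cases Q) (auto elim!: fwd_ParE intro: conn_Act_right conn.P1 conn_P2' conn_S1')
next
  case (syn X t1 X' Y t2 Y' l k)
  then show ?case by (cases Q) (auto elim!: fwd_ParE intro: conn.S3 conn_S2')
next
  case (sumL X t X' Y)
  then show ?case by (cases Q) (auto elim!: fwd_SumE intro: conn.C1 conn_C2')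
next
  case (sumR X t X' Y)
  then show ?case by (cases Q) (auto elim!: fwd_SumE intro: conn.C1 conn_C2')
qed

inductive_simps dep_simps: "dep (PL d t) t'" "dep (SL d t) t'" "dep (Syn t1 t2) t'"

lemma flip_neq[simp]: "flip d \<noteq> d" "d \<noteq> flip d"
  by (cases d; simp)+

lemma indep_not_dep: "indep t u \<Longrightarrow> \<not> dep t u"
  by (induction rule: indep.induct) (auto simp: dep_simps is_prefix_def)

lemma conn_indep_dep: "conn t u \<Longrightarrow> indep t u \<or> dep t u"
proof (induction rule: conn.induct)
  case (P2 d t t')
  then show ?case by (cases "pkey t = pkey t'") (auto intro: indep.intros dep.intros)
qed (auto intro: indep.intros dep.intros)

lemma ev_eq_props: "ev_eq t t' \<Longrightarrow> tlab t = tlab t' \<and> is_tr t \<and> is_tr t'"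
  by (induction rule: ev_eq.induct) (auto simp: square_def)

lemma tr_fwd_er: "is_tr t \<Longrightarrow> \<exists>A B. fwd A (tlab t) B \<and> er A = er (src t) \<and> er A = er (tgt t)"
  unfolding is_tr_def using fwd_er by (metis)

theorem lemma6p4:
  fixes e1 e2 :: "'n tr set"
  assumes "is_event e1" and "is_event e2" and "ev_connected e1 e2"
  shows "(ev_indep e1 e2 \<longleftrightarrow> \<not> ev_dep e1 e2) \<and>
         (ev_core_indep e1 e2 \<longrightarrow> ev_indep e1 e2) \<and>
         (ev_composable e1 e2 \<and> ev_indep e1 e2 \<longrightarrow> ev_core_indep e1 e2)"
proof -
  obtain a1 where a1: "is_tr a1" "e1 = {t'. ev_eq a1 t'}" using assms(1) unfolding is_event_def by blast
  obtain a2 where a2: "is_tr a2" "e2 = {t'. ev_eq a2 t'}" using assms(2) unfolding is_event_def by blast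
  define L1 where "L1 = tlab a1"
  define L2 where "L2 = tlab a2"
  have m1: "t \<in> e1 \<Longrightarrow> tlab t = L1 \<and> is_tr t" for t using a1 ev_eq_props L1_def by fastforce
  have m2: "t \<in> e2 \<Longrightarrow> tlab t = L2 \<and> is_tr t" for t using a2 ev_eq_props L2_def by fastforce
  have a1e: "a1 \<in> e1" using a1 ev_eq.refl by blast
  have a2e: "a2 \<in> e2" using a2 ev_eq.refl by blast
  obtain c1 c2 where c: "c1 \<in> e1" "c2 \<in> e2" "tr_connected c1 c2"
    using assms(3) unfolding ev_connected_def by blast
  have cn: "conn L1 L2"
  proof -
    obtain A1 B1 where 1: "fwd A1 (tlab c1) B1" "er A1 = er (src c1)"
      using tr_fwd_er m1 c(1) by blast
    obtain A2 B2 where 2: "fwd A2 (tlab c2) B2" "er A2 = er (tgt c2)"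
      using tr_fwd_er m2 c(2) by blast
    have "er (src c1) = er (tgt c2)" using c(3) steps_er unfolding tr_connected_def by blast
    then show ?thesis using conn_lemma[OF 1(1) 2(1)] 1 2 m1 m2 c by auto
  qed
  have ind: "ev_indep e1 e2 \<longleftrightarrow> indep L1 L2"
  proof
    assume "ev_indep e1 e2" then show "indep L1 L2"
      unfolding ev_indep_def tr_indep_def using m1 m2 by auto
  next
    assume "indep L1 L2" then show "ev_indep e1 e2"
      unfolding ev_indep_def tr_indep_def using m1 m2 c by auto
  qed
  have dp: "ev_dep e1 e2 \<longleftrightarrow> dep L1 L2"
    unfolding ev_dep_def using m1 m2 a1e a2e by auto
  have p1: "ev_indep e1 e2 \<longleftrightarrow> \<not> ev_dep e1 e2"
    using ind dp indep_not_dep conn_indep_dep[OF cn] by blast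
  have p2: "ev_core_indep e1 e2 \<longrightarrow> ev_indep e1 e2"
    unfolding ev_core_indep_def ev_indep_def by blast
  have p3: "ev_core_indep e1 e2" if cp: "ev_composable e1 e2" and ip: "ev_indep e1 e2"
  proof -
    obtain b1 b2 where b: "b1 \<in> e1" "b2 \<in> e2" "tgt b1 = src b2"
      using cp unfolding ev_composable_def by blast
    have il: "indep L1 L2" using ind ip by blast
    define P where "P = src b1"
    define Q where "Q = tgt b1"
    define R where "R = tgt b2"
    have rP: "reachable P" using m1 b P_def is_tr_ts by blast
    have t1: "ts P L1 (fw b1) Q" using m1[OF b(1)] is_tr_ts P_def Q_def by metis
    have t2: "ts Q L2 (fw b2) R" using m2[OF b(2)] is_tr_ts Q_def R_def b(3) by metis
    have t1r: "ts Q L1 (\<not> fw b1) P" using t1 ts_rev by metis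
    obtain S where s: "ts P L2 (fw b2) S" "ts R L1 (\<not> fw b1) S" using SP[OF t1r t2 il] by blast
    have s2: "ts S L1 (fw b1) R" using s(2) ts_rev by fastforce
    define t2' where "t2' = Tr P L2 (fw b2) S"
    define u' where "u' = Tr S L1 (fw b1) R"
    have rS: "reachable S" using rP s(1) ts_step reachable_step by blast
    have it2': "is_tr t2'" using rP s(1) unfolding t2'_def is_tr_ts by simp
    have iu': "is_tr u'" using rS s2 unfolding u'_def is_tr_ts by simp
    have stPQ: "step P Q" using t1 ts_step by blast
    have stPS: "step P S" using s(1) ts_step by blast
    have "tr_indep t2' b1"
      unfolding tr_indep_def tr_connected_def using it2' m1[OF b(1)] stPQ il indep_sym
      by (auto simp: t2'_def Q_def)
    then have "square t2' b2"
      unfolding square_def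
      apply -
      apply (rule conjI, rule it2')
      apply (rule conjI, rule m2[OF b(2), THEN conjunct2])
      apply (rule exI[of _ b1], rule exI[of _ u'])
      using it2' iu' m2[OF b(2)] m1[OF b(1)] b(3)
      by (auto simp: t2'_def u'_def P_def Q_def R_def)
    then have "ev_eq t2' b2" by (rule ev_eq.base)
    then have "ev_eq a2 t2'" using b(2) a2 by (blast intro: ev_eq.sym ev_eq.trans)
    then have t2'e: "t2' \<in> e2" using a2 by blast
    have "tr_indep b1 t2'"
      unfolding tr_indep_def tr_connected_def using it2' m1[OF b(1)] stPS il
      by (auto simp: t2'_def P_def)
    moreover have "src b1 = src t2'" by (simp add: t2'_def P_def)
    ultimately show ?thesis unfolding ev_core_indep_def using b(1) t2'e by blast
  qed
  show ?thesis using p1 p2 p3 by blast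
qed

end
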